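(* Let $D$ be a discrete valuation ring with maximal ideal $P=\pi D$ and field of fractions $K$. Let $A$ be a $D$-algebra with standard assumptions, and let $\widehat{A}$ be the $P$-adic completion of $A$. Then $\textnormal{Int}_K(\widehat{A})=\textnormal{Int}_K(A)$.
   Context: A $D$-algebra $A$ satisfies the standard assumptions if it is torsion-free as a $D$-module and $A\cap K = D$ inside $K\otimes_D A$; polynomials in $K[X]$ are evaluated in $K\otimes_D A$, and $\textnormal{Int}_K(A)=\{f\in K[X]\mid f(A)\subseteq A\}$. $\widehat{A}=\varprojlim A/\pi^kA$, into which $A$ embeds canonically; $\textnormal{Int}_K(\widehat{A})=\{f\in K[X]\mid f(\widehat{A})\subseteq \widehat{A}\}$, with evaluation in $K\otimes_D\widehat{A}$. *)

theory Defs
  imports "HOL-Computational_Algebra.Polynomial"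
begin

definition discrete_valuation :: "('k::field \<Rightarrow> int) \<Rightarrow> bool" where
  "discrete_valuation v \<longleftrightarrow>
     (\<forall>x y. x \<noteq> 0 \<longrightarrow> y \<noteq> 0 \<longrightarrow> v (x * y) = v x + v y) \<and>
     (\<forall>x y. x \<noteq> 0 \<longrightarrow> y \<noteq> 0 \<longrightarrow> x + y \<noteq> 0 \<longrightarrow> min (v x) (v y) \<le> v (x + y)) \<and>
     (\<forall>n. \<exists>x. x \<noteq> 0 \<and> v x = n)"

text \<open>D is a DVR whose field of fractions is the ambient field 'k:
  D is the valuation ring of a (normalised, surjective) discrete valuation on 'k.\<close>
definition is_dvr_of :: "'k::field set \<Rightarrow> bool" where
  "is_dvr_of D \<longleftrightarrow> (\<exists>v. discrete_valuation v \<and> D = {x. x = 0 \<or> 0 \<le> v x})"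

definition max_ideal :: "'k::field set \<Rightarrow> 'k set" where
  "max_ideal D = {x \<in> D. \<not> (\<exists>y\<in>D. x * y = 1)}"

definition K_algebra_map :: "('k::field \<Rightarrow> 'b::ring_1) \<Rightarrow> bool" where
  "K_algebra_map \<iota> \<longleftrightarrow>
     (\<forall>x y. \<iota> (x + y) = \<iota> x + \<iota> y) \<and> (\<forall>x y. \<iota> (x * y) = \<iota> x * \<iota> y) \<and>
     \<iota> 1 = 1 \<and> (\<forall>x b. \<iota> x * b = b * \<iota> x)"

definition D_subalgebra :: "('k::field \<Rightarrow> 'b::ring_1) \<Rightarrow> 'k set \<Rightarrow> 'b set \<Rightarrow> bool" where
  "D_subalgebra \<iota> D A \<longleftrightarrow>
     (\<forall>a\<in>A. \<forall>b\<in>A. a + b \<in> A \<and> a * b \<in> A \<and> - a \<in> A) \<and> 0 \<in> A \<and> 1 \<in> A \<and>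
     \<iota> ` D \<subseteq> A"

text \<open>B is (canonically isomorphic to) K (x)_D A: every element is a/d with a in A, d in D nonzero.
  (Torsion-freeness of A is automatic since the elements iota d, d nonzero, are units of B.)\<close>
definition is_K_tensor :: "('k::field \<Rightarrow> 'b::ring_1) \<Rightarrow> 'k set \<Rightarrow> 'b set \<Rightarrow> bool" where
  "is_K_tensor \<iota> D A \<longleftrightarrow> K_algebra_map \<iota> \<and> D_subalgebra \<iota> D A \<and>
     (\<forall>b. \<exists>d\<in>D. d \<noteq> 0 \<and> \<iota> d * b \<in> A)"

text \<open>Standard assumptions: torsion free (automatic here) and A \<inter> K = D inside K (x)_D A.\<close>
definition standard_assumptions :: "('k::field \<Rightarrow> 'b::ring_1) \<Rightarrow> 'k set \<Rightarrow> 'b set \<Rightarrow> bool" where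
  "standard_assumptions \<iota> D A \<longleftrightarrow> is_K_tensor \<iota> D A \<and> (\<forall>x. \<iota> x \<in> A \<longleftrightarrow> x \<in> D)"

definition eval_alg :: "('k::field \<Rightarrow> 'b::ring_1) \<Rightarrow> 'k poly \<Rightarrow> 'b \<Rightarrow> 'b" where
  "eval_alg \<iota> f b = (\<Sum>i\<le>degree f. \<iota> (coeff f i) * b ^ i)"

definition Int_K :: "('k::field \<Rightarrow> 'b::ring_1) \<Rightarrow> 'b set \<Rightarrow> 'k poly set" where
  "Int_K \<iota> A = {f. \<forall>a\<in>A. eval_alg \<iota> f a \<in> A}"

definition pow_ideal :: "('k::field \<Rightarrow> 'b::ring_1) \<Rightarrow> 'k \<Rightarrow> 'b set \<Rightarrow> nat \<Rightarrow> 'b set" where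
  "pow_ideal \<iota> \<pi> A k = (\<lambda>a. \<iota> (\<pi> ^ k) * a) ` A"

text \<open>Ahat (inside the ambient algebra C, with structure map iota') together with maps
  p k : Ahat -> A (representatives of the components in A / pi^k A) is the inverse limit
  lim A/pi^k A: the p k are compatible D-algebra homomorphisms modulo pi^k A, and the
  induced map Ahat -> lim A/pi^k A is bijective.\<close>
definition is_padic_completion ::
  "('k::field \<Rightarrow> 'b::ring_1) \<Rightarrow> 'k set \<Rightarrow> 'k \<Rightarrow> 'b set \<Rightarrow>
   ('k \<Rightarrow> 'c::ring_1) \<Rightarrow> 'c set \<Rightarrow> (nat \<Rightarrow> 'c \<Rightarrow> 'b) \<Rightarrow> bool" where
  "is_padic_completion \<iota> D \<pi> A \<iota>' Ahat p \<longleftrightarrow>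
     (\<forall>k. \<forall>x\<in>Ahat. p k x \<in> A) \<and>
     (\<forall>k. \<forall>x\<in>Ahat. p (Suc k) x - p k x \<in> pow_ideal \<iota> \<pi> A k) \<and>
     (\<forall>k. \<forall>x\<in>Ahat. \<forall>y\<in>Ahat. p k (x + y) - (p k x + p k y) \<in> pow_ideal \<iota> \<pi> A k) \<and>
     (\<forall>k. \<forall>x\<in>Ahat. \<forall>y\<in>Ahat. p k (x * y) - p k x * p k y \<in> pow_ideal \<iota> \<pi> A k) \<and>
     (\<forall>k. p k 1 - 1 \<in> pow_ideal \<iota> \<pi> A k) \<and>
     (\<forall>k. \<forall>d\<in>D. \<forall>x\<in>Ahat. p k (\<iota>' d * x) - \<iota> d * p k x \<in> pow_ideal \<iota> \<pi> A k) \<and>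
     (\<forall>x\<in>Ahat. \<forall>y\<in>Ahat. (\<forall>k. p k x - p k y \<in> pow_ideal \<iota> \<pi> A k) \<longrightarrow> x = y) \<and>
     (\<forall>a. (\<forall>k. a k \<in> A) \<longrightarrow> (\<forall>k. a (Suc k) - a k \<in> pow_ideal \<iota> \<pi> A k) \<longrightarrow>
          (\<exists>x\<in>Ahat. \<forall>k. p k x - a k \<in> pow_ideal \<iota> \<pi> A k))"

end

theory Submission
  imports Defs
begin

lemma dvr_facts:
  fixes D :: "'k::field set"
  assumes "is_dvr_of D" "\<pi> \<in> D" "max_ideal D = (\<lambda>d. \<pi> * d) ` D"
  shows "\<pi> \<noteq> 0 \<and> (\<forall>c. \<exists>m. \<pi>^m * c \<in> D)"
proof -
  obtain v where dv: "discrete_valuation v" and Dv: "D = {x. x = 0 \<or> 0 \<le> v x}"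
    using assms(1) is_dvr_of_def by auto
  have mult: "\<And>x y. x\<noteq>0 \<Longrightarrow> y\<noteq>0 \<Longrightarrow> v(x*y) = v x + v y"
    using dv unfolding discrete_valuation_def by blast
  have surj: "\<And>n. \<exists>x. x\<noteq>0 \<and> v x = n" using dv unfolding discrete_valuation_def by blast
  have v1: "v 1 = 0" using mult[of 1 1] by simp
  have vinv: "v (inverse x) = - v x" if "x \<noteq> 0" for x
  proof -
    have "v (x * inverse x) = v x + v (inverse x)" by (rule mult) (use that in auto)
    then show ?thesis using that v1 by simp
  qed
  obtain x where x: "x\<noteq>0" "v x = 1" using surj by blast
  have "x \<in> max_ideal D" unfolding max_ideal_def
  proof (intro CollectI conjI)
    show "x \<in> D" using x Dv by auto
    show "\<not> (\<exists>y\<in>D. x * y = 1)"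
    proof
      assume "\<exists>y\<in>D. x * y = 1"
      then obtain y where y: "y \<in> D" "x * y = 1" by blast
      then have "y = inverse x" using x by (metis inverse_unique)
      then have "v y = -1" "y \<noteq> 0" using vinv x by auto
      then show False using y Dv by auto
    qed
  qed
  then obtain d where "x = \<pi> * d" using assms(3) by auto
  then have pnz: "\<pi> \<noteq> 0" using x by auto
  have "\<pi> \<in> max_ideal D" using assms(3) Dv v1 by force
  then have nu: "\<not> (\<exists>y\<in>D. \<pi> * y = 1)" unfolding max_ideal_def by auto
  have vp: "v \<pi> \<ge> 1"
  proof (rule ccontr)
    assume "\<not> v \<pi> \<ge> 1"
    moreover have "v \<pi> \<ge> 0" using assms(2) Dv pnz by auto
    ultimately have "v (inverse \<pi>) \<ge> 0" using vinv[OF pnz] by simp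
    then have "inverse \<pi> \<in> D" using Dv by auto
    then show False using nu pnz by auto
  qed
  have vpow: "v (\<pi>^m) = int m * v \<pi>" for m
  proof (induction m)
    case 0 then show ?case using v1 by simp
  next
    case (Suc m)
    have "v (\<pi> ^ Suc m) = v (\<pi> * \<pi>^m)" by simp
    also have "\<dots> = v \<pi> + v (\<pi>^m)" by (rule mult) (use pnz in auto)
    finally show ?case using Suc by (simp add: algebra_simps)
  qed
  have "\<exists>m. \<pi>^m * c \<in> D" for c
  proof (cases "c = 0")
    case True then show ?thesis using Dv by auto
  next
    case False
    define m where "m = nat (- v c)"
    have "v (\<pi>^m * c) = int m * v \<pi> + v c" using vpow mult[of "\<pi>^m" c] pnz False by simp
    also have "\<dots> \<ge> int m + v c" using mult_left_mono[OF vp, of "int m"] by simp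
    finally have "v (\<pi>^m * c) \<ge> 0" unfolding m_def by linarith
    then show ?thesis using Dv by auto
  qed
  then show ?thesis using pnz by blast
qed

locale setting =
  fixes \<iota> :: "'k::field \<Rightarrow> 'b::ring_1" and D :: "'k set" and A :: "'b set" and \<pi> :: 'k
  assumes alg: "K_algebra_map \<iota>" and sub: "D_subalgebra \<iota> D A" and piD: "\<pi> \<in> D"
    and pinz: "\<pi> \<noteq> 0"
begin

lemma K1: "\<forall>x y. \<iota> (x + y) = \<iota> x + \<iota> y" and K2: "\<forall>x y. \<iota> (x * y) = \<iota> x * \<iota> y"
  and K3: "\<iota> 1 = 1" and K4: "\<forall>x b. \<iota> x * b = b * \<iota> x"
  using alg unfolding K_algebra_map_def by - (erule conjE; assumption?)+

lemma i_add: "\<iota> (x + y) = \<iota> x + \<iota> y" by (rule K1[rule_format])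
lemma i_mult: "\<iota> (x * y) = \<iota> x * \<iota> y" by (rule K2[rule_format])
lemma i_one: "\<iota> 1 = 1" by (rule K3)
lemma i_central: "\<iota> x * b = b * \<iota> x" by (rule K4[rule_format])

lemma S1: "\<forall>a\<in>A. \<forall>b\<in>A. a + b \<in> A \<and> a * b \<in> A \<and> - a \<in> A"
  and S2: "0 \<in> A" and S3: "1 \<in> A" and S4: "\<iota> ` D \<subseteq> A"
  using sub unfolding D_subalgebra_def by - (erule conjE; assumption?)+

lemma A_add: "a \<in> A \<Longrightarrow> b \<in> A \<Longrightarrow> a + b \<in> A" using S1 by blast
lemma A_mult: "a \<in> A \<Longrightarrow> b \<in> A \<Longrightarrow> a * b \<in> A" using S1 by blast
lemma A_uminus: "a \<in> A \<Longrightarrow> - a \<in> A" using S1 by blast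
lemma A_zero: "0 \<in> A" by (rule S2)
lemma A_one: "1 \<in> A" by (rule S3)
lemma A_D: "d \<in> D \<Longrightarrow> \<iota> d \<in> A" using S4 by blast

lemma A_diff: "a \<in> A \<Longrightarrow> b \<in> A \<Longrightarrow> a - b \<in> A"
  unfolding diff_conv_add_uminus by (intro A_add A_uminus)

lemma A_pow: "a \<in> A \<Longrightarrow> a ^ n \<in> A"
  by (induction n) (auto intro: A_mult A_one)

lemma A_sum: "finite S \<Longrightarrow> (\<And>i. i \<in> S \<Longrightarrow> F i \<in> A) \<Longrightarrow> sum F S \<in> A"
  by (induction S rule: finite_induct) (auto intro: A_add A_zero)

lemma i_pow: "\<iota> (x ^ n) = \<iota> x ^ n"
  by (induction n) (auto simp: i_one i_mult)

lemma T_A: "\<iota> (\<pi> ^ k) \<in> A"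
  unfolding i_pow by (rule A_pow[OF A_D[OF piD]])

lemma i_inv: "c \<noteq> 0 \<Longrightarrow> \<iota> (inverse c) * \<iota> c = 1"
proof -
  assume "c \<noteq> 0"
  have "\<iota> (inverse c) * \<iota> c = \<iota> (inverse c * c)" by (simp only: i_mult)
  also have "\<dots> = 1" using \<open>c \<noteq> 0\<close> by (simp add: i_one)
  finally show ?thesis .
qed

lemma cancel: "c \<noteq> 0 \<Longrightarrow> \<iota> c * u = \<iota> c * w \<Longrightarrow> u = w"
proof -
  assume c: "c \<noteq> 0" and e: "\<iota> c * u = \<iota> c * w"
  have "u = (\<iota> (inverse c) * \<iota> c) * u" using i_inv[OF c] by simp
  also have "\<dots> = \<iota> (inverse c) * (\<iota> c * w)" using e by (simp add: mult.assoc)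
  also have "\<dots> = w" using i_inv[OF c] by (simp add: mult.assoc[symmetric])
  finally show ?thesis .
qed

lemma T_nz: "\<pi> ^ k \<noteq> 0" using pinz by simp

definition I :: "nat \<Rightarrow> 'b set" where "I k = pow_ideal \<iota> \<pi> A k"

lemma I_iff: "u \<in> I k \<longleftrightarrow> (\<exists>a\<in>A. u = \<iota> (\<pi>^k) * a)"
  unfolding I_def pow_ideal_def by auto

lemma I_A: "u \<in> I k \<Longrightarrow> u \<in> A"
  unfolding I_iff using A_mult[OF T_A] by blast

lemma I_0: "0 \<in> I k" unfolding I_iff using A_zero by (intro bexI[of _ 0]) simp_all

lemma I_add: "u \<in> I k \<Longrightarrow> w \<in> I k \<Longrightarrow> u + w \<in> I k"
proof -
  assume "u \<in> I k" "w \<in> I k"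
  then obtain a b where ab: "a \<in> A" "u = \<iota> (\<pi>^k) * a" "b \<in> A" "w = \<iota> (\<pi>^k) * b"
    unfolding I_iff by blast
  then have "u + w = \<iota> (\<pi>^k) * (a + b)" by (simp add: distrib_left)
  then show ?thesis unfolding I_iff using A_add[OF ab(1) ab(3)] by blast
qed

lemma I_uminus: "u \<in> I k \<Longrightarrow> - u \<in> I k"
  unfolding I_iff by (elim bexE, rule bexI[OF _ A_uminus]) simp_all

lemma I_diff: "u \<in> I k \<Longrightarrow> w \<in> I k \<Longrightarrow> u - w \<in> I k"
  unfolding diff_conv_add_uminus by (intro I_add I_uminus)

lemma I_multL: "a \<in> A \<Longrightarrow> u \<in> I k \<Longrightarrow> a * u \<in> I k"
proof -
  assume a: "a \<in> A" and "u \<in> I k"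
  then obtain b where b: "b \<in> A" "u = \<iota> (\<pi>^k) * b" using I_iff by auto
  have "a * u = (a * \<iota> (\<pi>^k)) * b" using b(2) by (simp add: mult.assoc)
  also have "\<dots> = \<iota> (\<pi>^k) * (a * b)" by (simp only: i_central[of "\<pi>^k" a, symmetric] mult.assoc)
  finally have "a * u = \<iota> (\<pi>^k) * (a * b)" .
  then show ?thesis using I_iff A_mult a b by auto
qed

lemma I_multR: "a \<in> A \<Longrightarrow> u \<in> I k \<Longrightarrow> u * a \<in> I k"
proof -
  assume a: "a \<in> A" and "u \<in> I k"
  then obtain b where b: "b \<in> A" "u = \<iota> (\<pi>^k) * b" unfolding I_iff by blast
  then have "u * a = \<iota> (\<pi>^k) * (b * a)" by (simp add: mult.assoc)
  then show ?thesis unfolding I_iff using A_mult[OF b(1) a] by blast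
qed

lemma I_mono: "k \<le> j \<Longrightarrow> u \<in> I j \<Longrightarrow> u \<in> I k"
proof -
  assume "k \<le> j" "u \<in> I j"
  then obtain b where b: "b \<in> A" "u = \<iota> (\<pi>^j) * b" using I_iff by auto
  obtain l where l: "j = k + l" using \<open>k \<le> j\<close> le_Suc_ex by blast
  have "u = \<iota> (\<pi>^k) * (\<iota> (\<pi>^l) * b)" using b l by (simp add: power_add i_mult mult.assoc)
  then show ?thesis using I_iff A_mult T_A b by auto
qed

lemma I_sum: "finite S \<Longrightarrow> (\<And>i. i \<in> S \<Longrightarrow> F i \<in> I k) \<Longrightarrow> sum F S \<in> I k"
  by (induction S rule: finite_induct) (auto intro: I_add I_0)

lemma I_sum_cong: "finite S \<Longrightarrow> (\<And>i. i \<in> S \<Longrightarrow> F i - G i \<in> I k) \<Longrightarrow> sum F S - sum G S \<in> I k"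
  using I_sum[of S "\<lambda>i. F i - G i" k] by (simp add: sum_subtractf)

lemma I_trans: "u - v \<in> I k \<Longrightarrow> v - w \<in> I k \<Longrightarrow> u - w \<in> I k"
proof -
  assume "u - v \<in> I k" "v - w \<in> I k"
  then have "(u - v) + (v - w) \<in> I k" by (rule I_add)
  then show ?thesis by simp
qed

lemma I_sym: "u - v \<in> I k \<Longrightarrow> v - u \<in> I k"
proof -
  assume "u - v \<in> I k"
  then have "- (u - v) \<in> I k" by (rule I_uminus)
  then show ?thesis by simp
qed

lemma I_cancel: "\<iota> (\<pi>^m) * u \<in> I (k + m) \<Longrightarrow> u \<in> I k"
proof -
  assume "\<iota> (\<pi>^m) * u \<in> I (k + m)"
  then obtain b where b: "b \<in> A" "\<iota> (\<pi>^m) * u = \<iota> (\<pi>^(k+m)) * b" unfolding I_iff by blast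
  have e: "\<iota> (\<pi>^(k+m)) = \<iota> (\<pi>^m) * \<iota> (\<pi>^k)"
    by (simp only: power_add mult.commute[of "\<pi>^k"] i_mult)
  have "\<iota> (\<pi>^m) * u = \<iota> (\<pi>^m) * (\<iota> (\<pi>^k) * b)"
    using b(2) unfolding e by (simp only: mult.assoc)
  then have "u = \<iota> (\<pi>^k) * b" by (rule cancel[OF T_nz])
  then show ?thesis unfolding I_iff using b(1) by blast
qed

lemma pow_cong: "a \<in> A \<Longrightarrow> a' \<in> A \<Longrightarrow> a - a' \<in> I k \<Longrightarrow> a ^ n - a' ^ n \<in> I k"
proof (induction n)
  case 0 then show ?case using I_0 by simp
next
  case (Suc n)
  have "a ^ Suc n - a' ^ Suc n = a^n * (a - a') + (a^n - a'^n) * a'"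
    by (simp add: algebra_simps power_commutes)
  moreover have "a^n * (a - a') \<in> I k" using Suc.prems by (intro I_multL A_pow)
  moreover have "(a^n - a'^n) * a' \<in> I k" using Suc by (intro I_multR) auto
  ultimately show ?case by (metis I_add)
qed

lemma eval_scale:
  "\<iota> (\<pi>^m) * eval_alg \<iota> f b = (\<Sum>i\<le>degree f. \<iota> (\<pi>^m * coeff f i) * b^i)"
  unfolding eval_alg_def by (simp add: sum_distrib_left i_mult mult.assoc)

lemma G_A: "(\<And>i. i \<le> N \<Longrightarrow> g i \<in> D) \<Longrightarrow> a \<in> A \<Longrightarrow> (\<Sum>i\<le>N. \<iota> (g i) * a^i) \<in> A"
  by (rule A_sum) (auto intro: A_mult A_D A_pow)

lemma G_cong: "(\<And>i. i \<le> N \<Longrightarrow> g i \<in> D) \<Longrightarrow> a \<in> A \<Longrightarrow> a' \<in> A \<Longrightarrow> a - a' \<in> I k \<Longrightarrow>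
   (\<Sum>i\<le>N. \<iota> (g i) * a^i) - (\<Sum>i\<le>N. \<iota> (g i) * a'^i) \<in> I k"
proof (rule I_sum_cong)
  fix i assume "i \<in> {..N}" "\<And>i. i \<le> N \<Longrightarrow> g i \<in> D" "a \<in> A" "a' \<in> A" "a - a' \<in> I k"
  then have "\<iota> (g i) * (a^i - a'^i) \<in> I k" using I_multL A_D pow_cong by auto
  then show "\<iota> (g i) * a ^ i - \<iota> (g i) * a' ^ i \<in> I k" by (simp add: algebra_simps)
qed auto

end

locale compl = A: setting \<iota> D A \<pi> + H: setting \<iota>' D Ahat \<pi>
  for \<iota> :: "'k::field \<Rightarrow> 'b::ring_1" and D A \<pi> and \<iota>' :: "'k \<Rightarrow> 'c::ring_1" and Ahat +
  fixes p :: "nat \<Rightarrow> 'c \<Rightarrow> 'b"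
  assumes powD: "\<pi>^j \<in> D" and comp: "is_padic_completion \<iota> D \<pi> A \<iota>' Ahat p"
begin

lemma p_A: "x \<in> Ahat \<Longrightarrow> p k x \<in> A"
  and p_step: "x \<in> Ahat \<Longrightarrow> p (Suc k) x - p k x \<in> A.I k"
  and p_add: "x \<in> Ahat \<Longrightarrow> y \<in> Ahat \<Longrightarrow> p k (x + y) - (p k x + p k y) \<in> A.I k"
  and p_mult: "x \<in> Ahat \<Longrightarrow> y \<in> Ahat \<Longrightarrow> p k (x * y) - p k x * p k y \<in> A.I k"
  and p_one: "p k 1 - 1 \<in> A.I k"
  and p_lin: "d \<in> D \<Longrightarrow> x \<in> Ahat \<Longrightarrow> p k (\<iota>' d * x) - \<iota> d * p k x \<in> A.I k"
  and p_uniq: "x \<in> Ahat \<Longrightarrow> y \<in> Ahat \<Longrightarrow> (\<And>k. p k x - p k y \<in> A.I k) \<Longrightarrow> x = y"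
  and p_ex: "(\<And>k. a k \<in> A) \<Longrightarrow> (\<And>k. a (Suc k) - a k \<in> A.I k) \<Longrightarrow>
          (\<exists>x\<in>Ahat. \<forall>k. p k x - a k \<in> A.I k)"
  using comp unfolding is_padic_completion_def A.I_def by blast+

lemma p_sum: "(\<And>i. i \<le> (n::nat) \<Longrightarrow> F i \<in> Ahat) \<Longrightarrow>
   p k (\<Sum>i\<le>n. F i) - (\<Sum>i\<le>n. p k (F i)) \<in> A.I k"
proof (induction n)
  case 0 then show ?case using A.I_0 by simp
next
  case (Suc n)
  have S: "(\<Sum>i\<le>n. F i) \<in> Ahat" using Suc.prems by (intro H.A_sum) auto
  have F: "F (Suc n) \<in> Ahat" using Suc.prems by auto
  have 1: "p k ((\<Sum>i\<le>n. F i) + F (Suc n)) - (p k (\<Sum>i\<le>n. F i) + p k (F (Suc n))) \<in> A.I k"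
    using p_add S F by blast
  have 2: "(p k (\<Sum>i\<le>n. F i) + p k (F (Suc n))) - ((\<Sum>i\<le>n. p k (F i)) + p k (F (Suc n))) \<in> A.I k"
    using Suc by simp
  show ?case using A.I_trans[OF 1 2] by simp
qed

lemma p_pow: "x \<in> Ahat \<Longrightarrow> p k (x ^ n) - (p k x) ^ n \<in> A.I k"
proof (induction n)
  case 0 then show ?case using p_one by simp
next
  case (Suc n)
  have 1: "p k (x^n * x) - p k (x^n) * p k x \<in> A.I k" using p_mult Suc H.A_pow by blast
  have "(p k (x^n) - p k x ^ n) * p k x \<in> A.I k" using A.I_multR Suc p_A by blast
  then have 2: "p k (x^n) * p k x - p k x ^ n * p k x \<in> A.I k" by (simp add: algebra_simps)
  have "p k (x^Suc n) - p k x ^ Suc n = p k (x^n * x) - p k x ^ n * p k x" by (simp only: power_Suc2)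
  then show ?case using A.I_trans[OF 1 2] by simp
qed

lemma p_G: "x \<in> Ahat \<Longrightarrow> (\<And>i. i \<le> N \<Longrightarrow> g i \<in> D) \<Longrightarrow>
  p k (\<Sum>i\<le>N. \<iota>' (g i) * x^i) - (\<Sum>i\<le>N. \<iota> (g i) * (p k x)^i) \<in> A.I k"
proof -
  assume x: "x \<in> Ahat" and g: "\<And>i. i \<le> N \<Longrightarrow> g i \<in> D"
  have 1: "p k (\<Sum>i\<le>N. \<iota>' (g i) * x^i) - (\<Sum>i\<le>N. p k (\<iota>' (g i) * x^i)) \<in> A.I k"
    by (rule p_sum) (intro H.A_mult H.A_D H.A_pow g x; simp)
  have 2: "(\<Sum>i\<le>N. p k (\<iota>' (g i) * x^i)) - (\<Sum>i\<le>N. \<iota> (g i) * (p k x)^i) \<in> A.I k"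
  proof (rule A.I_sum_cong)
    fix i assume i: "i \<in> {..N}"
    have a: "p k (\<iota>' (g i) * x^i) - \<iota> (g i) * p k (x^i) \<in> A.I k"
      using i by (intro p_lin g H.A_pow x) simp
    have "\<iota> (g i) * (p k (x^i) - (p k x)^i) \<in> A.I k"
      using i by (intro A.I_multL A.A_D g p_pow x) simp
    then have b: "\<iota> (g i) * p k (x^i) - \<iota> (g i) * (p k x)^i \<in> A.I k" by (simp add: algebra_simps)
    show "p k (\<iota>' (g i) * x^i) - \<iota> (g i) * (p k x)^i \<in> A.I k" using A.I_trans[OF a b] .
  qed auto
  show ?thesis using A.I_trans[OF 1 2] .
qed

lemma p_tele: "x \<in> Ahat \<Longrightarrow> p (k + j) x - p k x \<in> A.I k"
proof (induction j)
  case 0 then show ?case using A.I_0 by simp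
next
  case (Suc j)
  have st: "p (Suc (k + j)) x - p (k + j) x \<in> A.I k"
    by (rule A.I_mono[OF le_add1 p_step[OF Suc.prems]])
  show ?case using A.I_trans[OF st Suc.IH[OF Suc.prems]] by simp
qed

lemma divisible:
  assumes z: "z \<in> Ahat" and h: "\<And>k. p (k + m) z \<in> A.I m"
  shows "\<exists>y\<in>Ahat. z = \<iota>' (\<pi>^m) * y"
proof -
  define b where "b k = (SOME b. b \<in> A \<and> p (k + m) z = \<iota> (\<pi>^m) * b)" for k
  have bk: "b k \<in> A \<and> p (k + m) z = \<iota> (\<pi>^m) * b k" for k
    unfolding b_def by (rule someI_ex) (use h A.I_iff in blast)
  have cauchy: "b (Suc k) - b k \<in> A.I k" for k
  proof (rule A.I_cancel[where m=m])
    have "p (Suc k + m) z - p (k + m) z \<in> A.I (k + m)" using p_step z by simp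
    then show "\<iota> (\<pi>^m) * (b (Suc k) - b k) \<in> A.I (k + m)"
      using bk[of k] bk[of "Suc k"] by (simp add: algebra_simps)
  qed
  obtain y where y: "y \<in> Ahat" "\<And>k. p k y - b k \<in> A.I k"
    using p_ex[of b] bk cauchy by blast
  have "z = \<iota>' (\<pi>^m) * y"
  proof (rule p_uniq)
    show "z \<in> Ahat" by (rule z)
    show "\<iota>' (\<pi>^m) * y \<in> Ahat" using H.T_A y H.A_mult by blast
    fix k
    have 1: "p k z - p (k + m) z \<in> A.I k" using A.I_sym p_tele z by blast
    have 2: "p (k + m) z - \<iota> (\<pi>^m) * p k y \<in> A.I k"
    proof -
      have "\<iota> (\<pi>^m) * (p k y - b k) \<in> A.I k" using A.I_multL A.T_A y by blast
      then have "\<iota> (\<pi>^m) * b k - \<iota> (\<pi>^m) * p k y \<in> A.I k"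
        using A.I_sym by (simp add: algebra_simps)
      then show ?thesis using bk[of k] by simp
    qed
    have 3: "\<iota> (\<pi>^m) * p k y - p k (\<iota>' (\<pi>^m) * y) \<in> A.I k"
      using A.I_sym[OF p_lin[OF powD y(1)]] .
    show "p k z - p k (\<iota>' (\<pi>^m) * y) \<in> A.I k"
      using A.I_trans[OF A.I_trans[OF 1 2] 3] .
  qed
  then show ?thesis using y by blast
qed

end

lemma common_m:
  assumes "\<And>i. \<exists>m. P m i" and "\<And>m m' i. P m i \<Longrightarrow> m \<le> m' \<Longrightarrow> P m' i"
  shows "\<exists>m::nat. \<forall>i\<le>(N::nat). P m i"
proof (induction N)
  case 0 then show ?case using assms(1) by auto
next
  case (Suc N)
  then obtain m where m: "\<forall>i\<le>N. P m i" by blast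
  obtain m' where m': "P m' (Suc N)" using assms(1) by blast
  have "\<forall>i\<le>Suc N. P (max m m') i"
  proof (intro allI impI)
    fix i assume "i \<le> Suc N"
    then consider "i \<le> N" | "i = Suc N" by linarith
    then show "P (max m m') i"
    proof cases
      case 1 show ?thesis by (rule assms(2)[OF m[rule_format, OF 1]]) simp
    next
      case 2 have "P (max m m') (Suc N)" by (rule assms(2)[OF m']) simp
      then show ?thesis using 2 by simp
    qed
  qed
  then show ?case by blast
qed

theorem mainTheorem10:
  fixes D :: "'k::field set" and \<pi> :: 'k
    and \<iota> :: "'k \<Rightarrow> 'b::ring_1" and A :: "'b set"
    and \<iota>' :: "'k \<Rightarrow> 'c::ring_1" and Ahat :: "'c set" and p :: "nat \<Rightarrow> 'c \<Rightarrow> 'b"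
  assumes "is_dvr_of D"
    and "\<pi> \<in> D" and "max_ideal D = (\<lambda>d. \<pi> * d) ` D"
    and "standard_assumptions \<iota> D A"
    and "is_K_tensor \<iota>' D Ahat"
    and "is_padic_completion \<iota> D \<pi> A \<iota>' Ahat p"
  shows "Int_K \<iota>' Ahat = Int_K \<iota> A"
proof -
  have dv: "\<pi> \<noteq> 0" "\<And>c. \<exists>m. \<pi>^m * c \<in> D" using dvr_facts[OF assms(1-3)] by auto
  have std: "\<And>x. \<iota> x \<in> A \<longleftrightarrow> x \<in> D" and KA: "K_algebra_map \<iota>" "D_subalgebra \<iota> D A"
    using assms(4) unfolding standard_assumptions_def is_K_tensor_def by auto
  have KH: "K_algebra_map \<iota>'" "D_subalgebra \<iota>' D Ahat"
    using assms(5) unfolding is_K_tensor_def by auto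
  interpret S: setting \<iota> D A \<pi> by (rule setting.intro[OF KA(1) KA(2) assms(2) dv(1)])
  have Dmult: "x \<in> D \<Longrightarrow> y \<in> D \<Longrightarrow> x * y \<in> D" for x y
  proof -
    assume "x \<in> D" "y \<in> D"
    then have "\<iota> x * \<iota> y \<in> A" using std S.A_mult by blast
    then have "\<iota> (x * y) \<in> A" by (simp only: S.i_mult)
    then show ?thesis using std by blast
  qed
  have piD: "\<pi>^j \<in> D" for j using std S.T_A by blast
  interpret compl \<iota> D A \<pi> \<iota>' Ahat p
    by (intro compl.intro setting.intro compl_axioms.intro KA KH assms(2,6) dv(1) piD)
  have coef: "\<exists>m. \<forall>i\<le>degree f. \<pi>^m * coeff f i \<in> D" for f :: "'k poly"
  proof (rule common_m)
    show "\<exists>m. \<pi>^m * coeff f i \<in> D" for i using dv(2) by blast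
    fix m m' i assume h: "\<pi>^m * coeff f i \<in> D" "m \<le> (m'::nat)"
    have e: "\<pi>^m' * coeff f i = \<pi>^(m'-m) * (\<pi>^m * coeff f i)"
      using h(2) by (simp add: power_add[symmetric] mult.assoc)
    show "\<pi>^m' * coeff f i \<in> D" unfolding e by (rule Dmult[OF piD h(1)])
  qed
  show ?thesis
  proof (intro set_eqI iffI)
    fix f assume f: "f \<in> Int_K \<iota>' Ahat"
    obtain m where m: "\<forall>i\<le>degree f. \<pi>^m * coeff f i \<in> D" using coef by blast
    define g where "g i = \<pi>^m * coeff f i" for i
    define N where "N = degree f"
    have g: "\<And>i. i \<le> N \<Longrightarrow> g i \<in> D" using m unfolding g_def N_def by auto
    show "f \<in> Int_K \<iota> A" unfolding Int_K_def
    proof (intro CollectI ballI)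
      fix a assume a: "a \<in> A"
      obtain x where x: "x \<in> Ahat" "\<And>k. p k x - a \<in> S.I k"
        using p_ex[of "\<lambda>_. a"] a S.I_0 by auto
      define y where "y = eval_alg \<iota>' f x"
      have y: "y \<in> Ahat" using f x unfolding Int_K_def y_def by auto
      have Gx: "(\<Sum>i\<le>N. \<iota>' (g i) * x^i) = \<iota>' (\<pi>^m) * y"
        unfolding y_def H.eval_scale g_def N_def ..
      have 1: "(\<Sum>i\<le>N. \<iota> (g i) * a^i) - (\<Sum>i\<le>N. \<iota> (g i) * (p m x)^i) \<in> S.I m"
        by (rule S.G_cong[where g=g and N=N, OF g a p_A[OF x(1)] S.I_sym[OF x(2)]])
      have 2: "(\<Sum>i\<le>N. \<iota> (g i) * (p m x)^i) - p m (\<iota>' (\<pi>^m) * y) \<in> S.I m"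
      proof -
        have "p m (\<Sum>i\<le>N. \<iota>' (g i) * x^i) - (\<Sum>i\<le>N. \<iota> (g i) * (p m x)^i) \<in> S.I m"
          by (rule p_G[OF x(1) g])
        then have "p m (\<iota>' (\<pi>^m) * y) - (\<Sum>i\<le>N. \<iota> (g i) * (p m x)^i) \<in> S.I m"
          by (simp only: Gx)
        then show ?thesis by (rule S.I_sym)
      qed
      have 3: "p m (\<iota>' (\<pi>^m) * y) - \<iota> (\<pi>^m) * p m y \<in> S.I m"
        using p_lin[OF piD y] .
      have 4: "\<iota> (\<pi>^m) * p m y \<in> S.I m" using S.I_iff p_A y by blast
      have "(\<Sum>i\<le>N. \<iota> (g i) * a^i) \<in> S.I m"
        using S.I_add[OF S.I_trans[OF S.I_trans[OF 1 2] 3] 4] by simp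
      then obtain w where w: "w \<in> A" "(\<Sum>i\<le>N. \<iota> (g i) * a^i) = \<iota> (\<pi>^m) * w"
        using S.I_iff by blast
      have "\<iota> (\<pi>^m) * eval_alg \<iota> f a = \<iota> (\<pi>^m) * w"
        using w(2) unfolding S.eval_scale g_def N_def by simp
      then have "eval_alg \<iota> f a = w" by (rule S.cancel[OF S.T_nz])
      then show "eval_alg \<iota> f a \<in> A" using w by simp
    qed
  next
    fix f assume f: "f \<in> Int_K \<iota> A"
    obtain m where m: "\<forall>i\<le>degree f. \<pi>^m * coeff f i \<in> D" using coef by blast
    define g where "g i = \<pi>^m * coeff f i" for i
    define N where "N = degree f"
    have g: "\<And>i. i \<le> N \<Longrightarrow> g i \<in> D" using m unfolding g_def N_def by auto
    show "f \<in> Int_K \<iota>' Ahat" unfolding Int_K_def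
    proof (intro CollectI ballI)
      fix x assume x: "x \<in> Ahat"
      define z where "z = (\<Sum>i\<le>N. \<iota>' (g i) * x^i)"
      have z: "z \<in> Ahat" unfolding z_def using H.G_A g x by blast
      have zeq: "z = \<iota>' (\<pi>^m) * eval_alg \<iota>' f x"
        unfolding z_def H.eval_scale g_def N_def ..
      have "p (k + m) z \<in> S.I m" for k
      proof -
        have 1: "p (k+m) z - (\<Sum>i\<le>N. \<iota> (g i) * (p (k+m) x)^i) \<in> S.I m"
          unfolding z_def by (rule S.I_mono[OF le_add2 p_G[where g=g and N=N and k="k+m", OF x g]])
        have "(\<Sum>i\<le>N. \<iota> (g i) * (p (k+m) x)^i) = \<iota> (\<pi>^m) * eval_alg \<iota> f (p (k+m) x)"
          unfolding S.eval_scale g_def N_def ..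
        moreover have "eval_alg \<iota> f (p (k+m) x) \<in> A" using f p_A[OF x] unfolding Int_K_def by auto
        ultimately have 2: "(\<Sum>i\<le>N. \<iota> (g i) * (p (k+m) x)^i) \<in> S.I m" using S.I_iff by auto
        show ?thesis using S.I_add[OF 1 2] by simp
      qed
      then obtain y where y: "y \<in> Ahat" "z = \<iota>' (\<pi>^m) * y" using divisible[OF z] by blast
      then have "\<iota>' (\<pi>^m) * eval_alg \<iota>' f x = \<iota>' (\<pi>^m) * y" using zeq by simp
      then have "eval_alg \<iota>' f x = y" by (rule H.cancel[OF H.T_nz])
      then show "eval_alg \<iota>' f x \<in> Ahat" using y by simp
    qed
  qed
qed

end
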